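(* Let $e, e_1, e_2, e'_1$ be terms of $\mathrm{F}_H$ and $x$ a variable. If $e_1 \longrightarrow e_2$ and $e[e_1/x] \longrightarrow e'_1$, then there exists a term $e'$ such that $e[e_2/x] \longrightarrow^* e'[e_2/x]$ and $e'_1 \longrightarrow^* e'[e_1/x]$.
   Context: Syntax of the calculus $\mathrm{F}_H$. Fix a set of base types $B$ containing $\mathsf{Bool}$; each base type $B$ has a set $\mathcal{K}_B$ of constants (with $\mathcal{K}_{\mathsf{Bool}}=\{\mathsf{true},\mathsf{false}\}$); $k$ ranges over constants. Fix primitive operations $\mathtt{op}$, each with a denotation $[\![\mathtt{op}]\!]$, a partial function from tuples of constants to constants. Types: $T ::= B \mid \alpha \mid x{:}T_1\to T_2 \mid \forall\alpha.T \mid \{x{:}T \mid e\}$. Values: $v ::= k \mid \lambda x{:}T.e \mid \Lambda\alpha.e \mid \langle T_1\Rightarrow T_2\rangle^{\ell}$ ($\ell$ ranges over blame labels). Terms: $e ::= v \mid x \mid \mathtt{op}(e_1,\dots,e_n) \mid e_1\,e_2 \mid e\,T \mid \langle\!\langle \{x{:}T_1\mid e_1\}, e_2\rangle\!\rangle^{\ell} \mid \langle \{x{:}T_1\mid e_1\}, e_2, v\rangle^{\ell} \mid \Uparrow\ell$. Variables are not values. Substitution $e[e'/x]$ is capture-avoiding; $\mathsf{let}\ y{:}T = e_1\ \mathsf{in}\ e_2$ abbreviates $(\lambda y{:}T.e_2)\,e_1$. Reduction $\rightsquigarrow$: $\mathtt{op}(k_1,\dots,k_n)\rightsquigarrow[\![\mathtt{op}]\!](k_1,\dots,k_n)$;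 $(\lambda x{:}T.e)\,v\rightsquigarrow e[v/x]$; $(\Lambda\alpha.e)\,T\rightsquigarrow e[T/\alpha]$; $\langle B\Rightarrow B\rangle^\ell v\rightsquigarrow v$; $\langle x{:}T_{11}\to T_{12}\Rightarrow x{:}T_{21}\to T_{22}\rangle^\ell v\rightsquigarrow \lambda x{:}T_{21}.\,\mathsf{let}\ y{:}T_{11}=\langle T_{21}\Rightarrow T_{11}\rangle^\ell x\ \mathsf{in}\ \langle T_{12}[y/x]\Rightarrow T_{22}\rangle^\ell (v\,y)$ with $y$ fresh; $\langle\forall\alpha.T_1\Rightarrow\forall\alpha.T_2\rangle^\ell v\rightsquigarrow\Lambda\alpha.\langle T_1\Rightarrow T_2\rangle^\ell(v\,\alpha)$; $\langle\{x{:}T_1\mid e_1\}\Rightarrow T_2\rangle^\ell v\rightsquigarrow\langle T_1\Rightarrow T_2\rangle^\ell v$; $\langle T_1\Rightarrow\{x{:}T_2\mid e_2\}\rangle^\ell v\rightsquigarrow\langle\!\langle\{x{:}T_2\mid e_2\},\langle T_1\Rightarrow T_2\rangle^\ell v\rangle\!\rangle^\ell$ provided $T_1$ is not a refinement type; $\langle\!\langle\{x{:}T\mid e\},v\rangle\!\rangle^\ell\rightsquigarrow\langle\{x{:}T\mid e\},e[v/x],v\rangle^\ell$; $\langle\{x{:}T\mid e\},\mathsf{true},v\rangle^\ell\rightsquigarrow v$; $\langle\{x{:}T\mid e\},\mathsf{false},v\rangle^\ell\rightsquigarrow\Uparrow\ell$. Evaluation contexts: $E ::= [\,] \mid \mathtt{op}(v_1,\dots,v_n,E,e_1,\dots,e_m)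 \mid E\,e \mid v\,E \mid E\,T \mid \langle\!\langle\{x{:}T\mid e\},E\rangle\!\rangle^\ell \mid \langle\{x{:}T\mid e\},E,v\rangle^\ell$. Evaluation $\longrightarrow$: $E[e_1]\longrightarrow E[e_2]$ whenever $e_1\rightsquigarrow e_2$; $E[\Uparrow\ell]\longrightarrow\Uparrow\ell$ whenever $E\neq[\,]$. $\longrightarrow^*$ is the reflexive–transitive closure of $\longrightarrow$.
   Formalization: The lemma carries the extra hypothesis that the variable x does not occur free in the term $e_1$. The paper assumes this as well. *)

theory Defs
  imports Main
begin

text \<open>Locally nameless syntax of F_H. Bound term variables (bound by lambda,
dependent arrows and refinement types) and bound type variables (bound by
type abstraction and universal types) are de Bruijn indices in two separate
index spaces; free term and type variables are names (nat).
Parameters: 'b extra base types, 'k extra constants, 'o primitive operations,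
'l blame labels.\<close>

datatype 'b base = BBool | BOther 'b

datatype 'k const = CTrue | CFalse | CK 'k

datatype ('b,'k,'o,'l) ty =
    TBase "'b base"
  | TFVar nat
  | TBVar nat
  | TArr "('b,'k,'o,'l) ty" "('b,'k,'o,'l) ty"   (* x:T1 -> T2, T2 binds term index 0 *)
  | TAll "('b,'k,'o,'l) ty"      (* forall a. T, T binds type index 0 *)
  | TRef "('b,'k,'o,'l) ty" "('b,'k,'o,'l) tm"   (* {x:T | e}, e binds term index 0 *)
and ('b,'k,'o,'l) tm =
    Const "'k const"
  | BVar nat
  | FVar nat
  | Op 'o "('b,'k,'o,'l) tm list"
  | Lam "('b,'k,'o,'l) ty" "('b,'k,'o,'l) tm"   (* body binds term index 0 *)
  | TLam "('b,'k,'o,'l) tm"                     (* body binds type index 0 *)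
  | Cast "('b,'k,'o,'l) ty" "('b,'k,'o,'l) ty" 'l
  | App "('b,'k,'o,'l) tm" "('b,'k,'o,'l) tm"
  | TApp "('b,'k,'o,'l) tm" "('b,'k,'o,'l) ty"
  | Wait "('b,'k,'o,'l) ty" "('b,'k,'o,'l) tm" "('b,'k,'o,'l) tm" 'l
      (* Wait T e1 e2 l = <<{x:T|e1}, e2>>^l ; e1 binds term index 0 *)
  | Active "('b,'k,'o,'l) ty" "('b,'k,'o,'l) tm" "('b,'k,'o,'l) tm" "('b,'k,'o,'l) tm" 'l
      (* Active T e1 e2 v l = <{x:T|e1}, e2, v>^l ; e1 binds term index 0 *)
  | Blame 'l

fun is_val :: "('b,'k,'o,'l) tm \<Rightarrow> bool" where
  "is_val (Const _) = True"
| "is_val (Lam _ _) = True"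
| "is_val (TLam _) = True"
| "is_val (Cast _ _ _) = True"
| "is_val _ = False"

fun is_ref :: "('b,'k,'o,'l) ty \<Rightarrow> bool" where
  "is_ref (TRef _ _) = True"
| "is_ref _ = False"

primrec open_ty :: "nat \<Rightarrow> ('b,'k,'o,'l) tm \<Rightarrow> ('b,'k,'o,'l) ty \<Rightarrow> ('b,'k,'o,'l) ty"
and open_tm :: "nat \<Rightarrow> ('b,'k,'o,'l) tm \<Rightarrow> ('b,'k,'o,'l) tm \<Rightarrow> ('b,'k,'o,'l) tm" where
  "open_ty k u (TBase B) = TBase B"
| "open_ty k u (TFVar a) = TFVar a"
| "open_ty k u (TBVar i) = TBVar i"
| "open_ty k u (TArr T1 T2) = TArr (open_ty k u T1) (open_ty (Suc k) u T2)"
| "open_ty k u (TAll T) = TAll (open_ty k u T)"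
| "open_ty k u (TRef T e) = TRef (open_ty k u T) (open_tm (Suc k) u e)"
| "open_tm k u (Const c) = Const c"
| "open_tm k u (BVar i) = (if i = k then u else BVar i)"
| "open_tm k u (FVar y) = FVar y"
| "open_tm k u (Op f es) = Op f (map (open_tm k u) es)"
| "open_tm k u (Lam T e) = Lam (open_ty k u T) (open_tm (Suc k) u e)"
| "open_tm k u (TLam e) = TLam (open_tm k u e)"
| "open_tm k u (Cast T1 T2 l) = Cast (open_ty k u T1) (open_ty k u T2) l"
| "open_tm k u (App e1 e2) = App (open_tm k u e1) (open_tm k u e2)"
| "open_tm k u (TApp e T) = TApp (open_tm k u e) (open_ty k u T)"
| "open_tm k u (Wait T e1 e2 l) = Wait (open_ty k u T) (open_tm (Suc k) u e1) (open_tm k u e2) l"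
| "open_tm k u (Active T e1 e2 e3 l) =
     Active (open_ty k u T) (open_tm (Suc k) u e1) (open_tm k u e2) (open_tm k u e3) l"
| "open_tm k u (Blame l) = Blame l"

primrec topen_ty :: "nat \<Rightarrow> ('b,'k,'o,'l) ty \<Rightarrow> ('b,'k,'o,'l) ty \<Rightarrow> ('b,'k,'o,'l) ty"
and topen_tm :: "nat \<Rightarrow> ('b,'k,'o,'l) ty \<Rightarrow> ('b,'k,'o,'l) tm \<Rightarrow> ('b,'k,'o,'l) tm" where
  "topen_ty k U (TBase B) = TBase B"
| "topen_ty k U (TFVar a) = TFVar a"
| "topen_ty k U (TBVar i) = (if i = k then U else TBVar i)"
| "topen_ty k U (TArr T1 T2) = TArr (topen_ty k U T1) (topen_ty k U T2)"
| "topen_ty k U (TAll T) = TAll (topen_ty (Suc k) U T)"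
| "topen_ty k U (TRef T e) = TRef (topen_ty k U T) (topen_tm k U e)"
| "topen_tm k U (Const c) = Const c"
| "topen_tm k U (BVar i) = BVar i"
| "topen_tm k U (FVar y) = FVar y"
| "topen_tm k U (Op f es) = Op f (map (topen_tm k U) es)"
| "topen_tm k U (Lam T e) = Lam (topen_ty k U T) (topen_tm k U e)"
| "topen_tm k U (TLam e) = TLam (topen_tm (Suc k) U e)"
| "topen_tm k U (Cast T1 T2 l) = Cast (topen_ty k U T1) (topen_ty k U T2) l"
| "topen_tm k U (App e1 e2) = App (topen_tm k U e1) (topen_tm k U e2)"
| "topen_tm k U (TApp e T) = TApp (topen_tm k U e) (topen_ty k U T)"
| "topen_tm k U (Wait T e1 e2 l) = Wait (topen_ty k U T) (topen_tm k U e1) (topen_tm k U e2) l"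
| "topen_tm k U (Active T e1 e2 e3 l) =
     Active (topen_ty k U T) (topen_tm k U e1) (topen_tm k U e2) (topen_tm k U e3) l"
| "topen_tm k U (Blame l) = Blame l"

primrec shift_ty :: "nat \<Rightarrow> ('b,'k,'o,'l) ty \<Rightarrow> ('b,'k,'o,'l) ty"
and shift_tm :: "nat \<Rightarrow> ('b,'k,'o,'l) tm \<Rightarrow> ('b,'k,'o,'l) tm" where
  "shift_ty c (TBase B) = TBase B"
| "shift_ty c (TFVar a) = TFVar a"
| "shift_ty c (TBVar i) = TBVar i"
| "shift_ty c (TArr T1 T2) = TArr (shift_ty c T1) (shift_ty (Suc c) T2)"
| "shift_ty c (TAll T) = TAll (shift_ty c T)"
| "shift_ty c (TRef T e) = TRef (shift_ty c T) (shift_tm (Suc c) e)"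
| "shift_tm c (Const k) = Const k"
| "shift_tm c (BVar i) = (if c \<le> i then BVar (Suc i) else BVar i)"
| "shift_tm c (FVar y) = FVar y"
| "shift_tm c (Op f es) = Op f (map (shift_tm c) es)"
| "shift_tm c (Lam T e) = Lam (shift_ty c T) (shift_tm (Suc c) e)"
| "shift_tm c (TLam e) = TLam (shift_tm c e)"
| "shift_tm c (Cast T1 T2 l) = Cast (shift_ty c T1) (shift_ty c T2) l"
| "shift_tm c (App e1 e2) = App (shift_tm c e1) (shift_tm c e2)"
| "shift_tm c (TApp e T) = TApp (shift_tm c e) (shift_ty c T)"
| "shift_tm c (Wait T e1 e2 l) = Wait (shift_ty c T) (shift_tm (Suc c) e1) (shift_tm c e2) l"
| "shift_tm c (Active T e1 e2 e3 l) =
     Active (shift_ty c T) (shift_tm (Suc c) e1) (shift_tm c e2) (shift_tm c e3) l"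
| "shift_tm c (Blame l) = Blame l"

text \<open>Substitution e[u/x] of a term for a free term variable (name) x.
Capture is impossible in the locally nameless representation when u is a
(locally closed) term.\<close>
primrec subst_ty :: "nat \<Rightarrow> ('b,'k,'o,'l) tm \<Rightarrow> ('b,'k,'o,'l) ty \<Rightarrow> ('b,'k,'o,'l) ty"
and subst_tm :: "nat \<Rightarrow> ('b,'k,'o,'l) tm \<Rightarrow> ('b,'k,'o,'l) tm \<Rightarrow> ('b,'k,'o,'l) tm" where
  "subst_ty x u (TBase B) = TBase B"
| "subst_ty x u (TFVar a) = TFVar a"
| "subst_ty x u (TBVar i) = TBVar i"
| "subst_ty x u (TArr T1 T2) = TArr (subst_ty x u T1) (subst_ty x u T2)"
| "subst_ty x u (TAll T) = TAll (subst_ty x u T)"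
| "subst_ty x u (TRef T e) = TRef (subst_ty x u T) (subst_tm x u e)"
| "subst_tm x u (Const c) = Const c"
| "subst_tm x u (BVar i) = BVar i"
| "subst_tm x u (FVar y) = (if y = x then u else FVar y)"
| "subst_tm x u (Op f es) = Op f (map (subst_tm x u) es)"
| "subst_tm x u (Lam T e) = Lam (subst_ty x u T) (subst_tm x u e)"
| "subst_tm x u (TLam e) = TLam (subst_tm x u e)"
| "subst_tm x u (Cast T1 T2 l) = Cast (subst_ty x u T1) (subst_ty x u T2) l"
| "subst_tm x u (App e1 e2) = App (subst_tm x u e1) (subst_tm x u e2)"
| "subst_tm x u (TApp e T) = TApp (subst_tm x u e) (subst_ty x u T)"
| "subst_tm x u (Wait T e1 e2 l) = Wait (subst_ty x u T) (subst_tm x u e1) (subst_tm x u e2) l"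
| "subst_tm x u (Active T e1 e2 e3 l) =
     Active (subst_ty x u T) (subst_tm x u e1) (subst_tm x u e2) (subst_tm x u e3) l"
| "subst_tm x u (Blame l) = Blame l"

primrec fv_ty :: "('b,'k,'o,'l) ty \<Rightarrow> nat set"
and fv_tm :: "('b,'k,'o,'l) tm \<Rightarrow> nat set" where
  "fv_ty (TBase B) = {}"
| "fv_ty (TFVar a) = {}"
| "fv_ty (TBVar i) = {}"
| "fv_ty (TArr T1 T2) = fv_ty T1 \<union> fv_ty T2"
| "fv_ty (TAll T) = fv_ty T"
| "fv_ty (TRef T e) = fv_ty T \<union> fv_tm e"
| "fv_tm (Const c) = {}"
| "fv_tm (BVar i) = {}"
| "fv_tm (FVar y) = {y}"
| "fv_tm (Op f es) = \<Union> (set (map fv_tm es))"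
| "fv_tm (Lam T e) = fv_ty T \<union> fv_tm e"
| "fv_tm (TLam e) = fv_tm e"
| "fv_tm (Cast T1 T2 l) = fv_ty T1 \<union> fv_ty T2"
| "fv_tm (App e1 e2) = fv_tm e1 \<union> fv_tm e2"
| "fv_tm (TApp e T) = fv_tm e \<union> fv_ty T"
| "fv_tm (Wait T e1 e2 l) = fv_ty T \<union> fv_tm e1 \<union> fv_tm e2"
| "fv_tm (Active T e1 e2 e3 l) = fv_ty T \<union> fv_tm e1 \<union> fv_tm e2 \<union> fv_tm e3"
| "fv_tm (Blame l) = {}"

text \<open>Well-formedness: all term indices below n, all type indices below m, and
the third component of an active check is a value (as the grammar demands).
Terms of F_H are the pre-terms with wf_tm 0 0.\<close>
primrec wf_ty :: "nat \<Rightarrow> nat \<Rightarrow> ('b,'k,'o,'l) ty \<Rightarrow> bool"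
and wf_tm :: "nat \<Rightarrow> nat \<Rightarrow> ('b,'k,'o,'l) tm \<Rightarrow> bool" where
  "wf_ty n m (TBase B) = True"
| "wf_ty n m (TFVar a) = True"
| "wf_ty n m (TBVar i) = (i < m)"
| "wf_ty n m (TArr T1 T2) = (wf_ty n m T1 \<and> wf_ty (Suc n) m T2)"
| "wf_ty n m (TAll T) = wf_ty n (Suc m) T"
| "wf_ty n m (TRef T e) = (wf_ty n m T \<and> wf_tm (Suc n) m e)"
| "wf_tm n m (Const c) = True"
| "wf_tm n m (BVar i) = (i < n)"
| "wf_tm n m (FVar y) = True"
| "wf_tm n m (Op f es) = list_all (wf_tm n m) es"
| "wf_tm n m (Lam T e) = (wf_ty n m T \<and> wf_tm (Suc n) m e)"
| "wf_tm n m (TLam e) = wf_tm n (Suc m) e"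
| "wf_tm n m (Cast T1 T2 l) = (wf_ty n m T1 \<and> wf_ty n m T2)"
| "wf_tm n m (App e1 e2) = (wf_tm n m e1 \<and> wf_tm n m e2)"
| "wf_tm n m (TApp e T) = (wf_tm n m e \<and> wf_ty n m T)"
| "wf_tm n m (Wait T e1 e2 l) = (wf_ty n m T \<and> wf_tm (Suc n) m e1 \<and> wf_tm n m e2)"
| "wf_tm n m (Active T e1 e2 e3 l) =
     (wf_ty n m T \<and> wf_tm (Suc n) m e1 \<and> wf_tm n m e2 \<and> wf_tm n m e3 \<and> is_val e3)"
| "wf_tm n m (Blame l) = True"

definition is_term :: "('b,'k,'o,'l) tm \<Rightarrow> bool" where
  "is_term e \<longleftrightarrow> wf_tm 0 0 e"

text \<open>Basic reduction, parameterised by the denotation \<delta> of primitive operations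
(a partial function from tuples of constants to constants).\<close>
inductive red :: "('o \<Rightarrow> 'k const list \<Rightarrow> 'k const option)
    \<Rightarrow> ('b,'k,'o,'l) tm \<Rightarrow> ('b,'k,'o,'l) tm \<Rightarrow> bool" for \<delta> where
  R_Op: "\<delta> f ks = Some k \<Longrightarrow> red \<delta> (Op f (map Const ks)) (Const k)"
| R_Beta: "is_val v \<Longrightarrow> red \<delta> (App (Lam T e) v) (open_tm 0 v e)"
| R_TBeta: "red \<delta> (TApp (TLam e) T) (topen_tm 0 T e)"
| R_Base: "is_val v \<Longrightarrow> red \<delta> (App (Cast (TBase B) (TBase B) l) v) v"
| R_Fun: "is_val v \<Longrightarrow> red \<delta> (App (Cast (TArr T11 T12) (TArr T21 T22) l) v)
     (Lam T21
        (App (Lam T11 (App (Cast T12 (shift_ty 0 T22) l) (App v (BVar 0))))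
             (App (Cast T21 T11 l) (BVar 0))))"
| R_Forall: "is_val v \<Longrightarrow> red \<delta> (App (Cast (TAll T1) (TAll T2) l) v)
     (TLam (App (Cast T1 T2 l) (TApp v (TBVar 0))))"
| R_Forget: "is_val v \<Longrightarrow> red \<delta> (App (Cast (TRef T1 e1) T2 l) v) (App (Cast T1 T2 l) v)"
| R_PreCheck: "\<lbrakk>is_val v; \<not> is_ref T1\<rbrakk> \<Longrightarrow>
     red \<delta> (App (Cast T1 (TRef T2 e2) l) v) (Wait T2 e2 (App (Cast T1 T2 l) v) l)"
| R_Check: "is_val v \<Longrightarrow> red \<delta> (Wait T e v l) (Active T e (open_tm 0 v e) v l)"
| R_OK: "red \<delta> (Active T e (Const CTrue) v l) v"
| R_Fail: "red \<delta> (Active T e (Const CFalse) v l) (Blame l)"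

datatype ('b,'k,'o,'l) ctx =
    Hole
  | COp 'o "('b,'k,'o,'l) tm list" "('b,'k,'o,'l) ctx" "('b,'k,'o,'l) tm list"
  | CAppL "('b,'k,'o,'l) ctx" "('b,'k,'o,'l) tm"
  | CAppR "('b,'k,'o,'l) tm" "('b,'k,'o,'l) ctx"
  | CTApp "('b,'k,'o,'l) ctx" "('b,'k,'o,'l) ty"
  | CWait "('b,'k,'o,'l) ty" "('b,'k,'o,'l) tm" "('b,'k,'o,'l) ctx" 'l
  | CActive "('b,'k,'o,'l) ty" "('b,'k,'o,'l) tm" "('b,'k,'o,'l) ctx" "('b,'k,'o,'l) tm" 'l

primrec ectx :: "('b,'k,'o,'l) ctx \<Rightarrow> bool" where
  "ectx Hole = True"
| "ectx (COp f vs E es) = (list_all is_val vs \<and> ectx E)"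
| "ectx (CAppL E e) = ectx E"
| "ectx (CAppR v E) = (is_val v \<and> ectx E)"
| "ectx (CTApp E T) = ectx E"
| "ectx (CWait T e E l) = ectx E"
| "ectx (CActive T e E v l) = (is_val v \<and> ectx E)"

primrec plug :: "('b,'k,'o,'l) ctx \<Rightarrow> ('b,'k,'o,'l) tm \<Rightarrow> ('b,'k,'o,'l) tm" where
  "plug Hole t = t"
| "plug (COp f vs E es) t = Op f (vs @ [plug E t] @ es)"
| "plug (CAppL E e) t = App (plug E t) e"
| "plug (CAppR v E) t = App v (plug E t)"
| "plug (CTApp E T) t = TApp (plug E t) T"
| "plug (CWait T e E l) t = Wait T e (plug E t) l"
| "plug (CActive T e E v l) t = Active T e (plug E t) v l"

inductive eval :: "('o \<Rightarrow> 'k const list \<Rightarrow> 'k const option)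
    \<Rightarrow> ('b,'k,'o,'l) tm \<Rightarrow> ('b,'k,'o,'l) tm \<Rightarrow> bool" for \<delta> where
  E_Red: "\<lbrakk>ectx E; red \<delta> e1 e2\<rbrakk> \<Longrightarrow> eval \<delta> (plug E e1) (plug E e2)"
| E_Blame: "\<lbrakk>ectx E; E \<noteq> Hole\<rbrakk> \<Longrightarrow> eval \<delta> (plug E (Blame l)) (Blame l)"

abbreviation evals :: "('o \<Rightarrow> 'k const list \<Rightarrow> 'k const option)
    \<Rightarrow> ('b,'k,'o,'l) tm \<Rightarrow> ('b,'k,'o,'l) tm \<Rightarrow> bool" where
  "evals \<delta> \<equiv> (eval \<delta>)\<^sup>*\<^sup>*"

end

theory Submission imports Defs begin

lemma open_wf:
  fixes T :: "('b,'k,'o,'l) ty" and t :: "('b,'k,'o,'l) tm"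
  shows "wf_ty n m T \<Longrightarrow> n \<le> k \<Longrightarrow> open_ty k w T = T"
    and "wf_tm n m t \<Longrightarrow> n \<le> k \<Longrightarrow> open_tm k w t = t"
proof (induct T and t arbitrary: n m k and n m k)
  case (Op f es) then show ?case by (auto simp: list_all_iff intro!: map_idI)
qed auto

lemma topen_wf:
  fixes T :: "('b,'k,'o,'l) ty" and t :: "('b,'k,'o,'l) tm"
  shows "wf_ty n m T \<Longrightarrow> m \<le> k \<Longrightarrow> topen_ty k w T = T"
    and "wf_tm n m t \<Longrightarrow> m \<le> k \<Longrightarrow> topen_tm k w t = t"
proof (induct T and t arbitrary: n m k and n m k)
  case (Op f es) then show ?case by (auto simp: list_all_iff intro!: map_idI)
qed auto

lemma shift_wf:
  fixes T :: "('b,'k,'o,'l) ty" and t :: "('b,'k,'o,'l) tm"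
  shows "wf_ty n m T \<Longrightarrow> n \<le> k \<Longrightarrow> shift_ty k T = T"
    and "wf_tm n m t \<Longrightarrow> n \<le> k \<Longrightarrow> shift_tm k t = t"
proof (induct T and t arbitrary: n m k and n m k)
  case (Op f es) then show ?case by (auto simp: list_all_iff intro!: map_idI)
qed auto

lemma subst_open:
  fixes T :: "('b,'k,'o,'l) ty" and t :: "('b,'k,'o,'l) tm"
  assumes "wf_tm 0 0 u"
  shows "subst_ty x u (open_ty k v T) = open_ty k (subst_tm x u v) (subst_ty x u T)"
    and "subst_tm x u (open_tm k v t) = open_tm k (subst_tm x u v) (subst_tm x u t)"
  by (induct T and t arbitrary: k and k)
     (auto simp: open_wf(2)[OF assms])

lemma subst_topen:
  fixes T :: "('b,'k,'o,'l) ty" and t :: "('b,'k,'o,'l) tm"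
  assumes "wf_tm 0 0 u"
  shows "subst_ty x u (topen_ty k V T) = topen_ty k (subst_ty x u V) (subst_ty x u T)"
    and "subst_tm x u (topen_tm k V t) = topen_tm k (subst_ty x u V) (subst_tm x u t)"
  by (induct T and t arbitrary: k and k)
     (auto simp: topen_wf(2)[OF assms])

lemma subst_shift:
  fixes T :: "('b,'k,'o,'l) ty" and t :: "('b,'k,'o,'l) tm"
  assumes "wf_tm 0 0 u"
  shows "subst_ty x u (shift_ty k T) = shift_ty k (subst_ty x u T)"
    and "subst_tm x u (shift_tm k t) = shift_tm k (subst_tm x u t)"
  by (induct T and t arbitrary: k and k)
     (auto simp: shift_wf(2)[OF assms])

lemma subst_fresh:
  fixes T :: "('b,'k,'o,'l) ty" and t :: "('b,'k,'o,'l) tm"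
  shows "x \<notin> fv_ty T \<Longrightarrow> subst_ty x u T = T"
    and "x \<notin> fv_tm t \<Longrightarrow> subst_tm x u t = t"
proof (induct T and t)
  case (Op f es) then show ?case by (auto intro: map_idI)
qed auto

lemma fv_open:
  fixes T :: "('b,'k,'o,'l) ty" and t :: "('b,'k,'o,'l) tm"
  shows "y \<in> fv_ty (open_ty k u T) \<Longrightarrow> y \<in> fv_tm u \<or> y \<in> fv_ty T"
    and "y \<in> fv_tm (open_tm k u t) \<Longrightarrow> y \<in> fv_tm u \<or> y \<in> fv_tm t"
  by (induct T and t arbitrary: k and k) (fastforce split: if_splits)+

lemma fv_topen:
  fixes T :: "('b,'k,'o,'l) ty" and t :: "('b,'k,'o,'l) tm"
  shows "y \<in> fv_ty (topen_ty k U T) \<Longrightarrow> y \<in> fv_ty U \<or> y \<in> fv_ty T"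
    and "y \<in> fv_tm (topen_tm k U t) \<Longrightarrow> y \<in> fv_ty U \<or> y \<in> fv_tm t"
  by (induct T and t arbitrary: k and k) (fastforce split: if_splits)+

lemma fv_shift:
  fixes T :: "('b,'k,'o,'l) ty" and t :: "('b,'k,'o,'l) tm"
  shows "fv_ty (shift_ty k T) = fv_ty T"
    and "fv_tm (shift_tm k t) = fv_tm t"
  by (induct T and t arbitrary: k and k) auto

lemma is_val_subst: "\<not> is_val u \<Longrightarrow> is_val (subst_tm x u v) = is_val v"
  by (cases v) auto

lemma is_val_subst2: "is_val v \<Longrightarrow> is_val (subst_tm x u v)"
  by (cases v) auto

lemma wf_subst_rev:
  fixes T :: "('b,'k,'o,'l) ty" and t :: "('b,'k,'o,'l) tm"
  assumes "\<not> is_val u"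
  shows "wf_ty n m (subst_ty x u T) \<Longrightarrow> wf_ty n m T"
    and "wf_tm n m (subst_tm x u t) \<Longrightarrow> wf_tm n m t"
  by (induct T and t arbitrary: n m and n m)
     (auto simp: list_all_iff is_val_subst[OF assms])


primrec subst_ctx :: "nat \<Rightarrow> ('b,'k,'o,'l) tm \<Rightarrow> ('b,'k,'o,'l) ctx \<Rightarrow> ('b,'k,'o,'l) ctx" where
  "subst_ctx x u Hole = Hole"
| "subst_ctx x u (COp f vs E es) = COp f (map (subst_tm x u) vs) (subst_ctx x u E) (map (subst_tm x u) es)"
| "subst_ctx x u (CAppL E e) = CAppL (subst_ctx x u E) (subst_tm x u e)"
| "subst_ctx x u (CAppR v E) = CAppR (subst_tm x u v) (subst_ctx x u E)"
| "subst_ctx x u (CTApp E T) = CTApp (subst_ctx x u E) (subst_ty x u T)"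
| "subst_ctx x u (CWait T e E l) = CWait (subst_ty x u T) (subst_tm x u e) (subst_ctx x u E) l"
| "subst_ctx x u (CActive T e E v l) = CActive (subst_ty x u T) (subst_tm x u e) (subst_ctx x u E) (subst_tm x u v) l"

primrec ccomp :: "('b,'k,'o,'l) ctx \<Rightarrow> ('b,'k,'o,'l) ctx \<Rightarrow> ('b,'k,'o,'l) ctx" where
  "ccomp Hole F = F"
| "ccomp (COp f vs E es) F = COp f vs (ccomp E F) es"
| "ccomp (CAppL E e) F = CAppL (ccomp E F) e"
| "ccomp (CAppR v E) F = CAppR v (ccomp E F)"
| "ccomp (CTApp E T) F = CTApp (ccomp E F) T"
| "ccomp (CWait T e E l) F = CWait T e (ccomp E F) l"
| "ccomp (CActive T e E v l) F = CActive T e (ccomp E F) v l"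

lemma plug_ccomp: "plug (ccomp E F) t = plug E (plug F t)"
  by (induct E) auto

lemma ectx_ccomp: "ectx (ccomp E F) = (ectx E \<and> ectx F)"
  by (induct E) auto

lemma plug_subst: "subst_tm x u (plug E t) = plug (subst_ctx x u E) (subst_tm x u t)"
  by (induct E) auto

lemma ectx_subst1: "ectx E \<Longrightarrow> ectx (subst_ctx x u E)"
  by (induct E) (auto simp: list_all_iff is_val_subst2)

lemma ectx_subst2: "ectx (subst_ctx x u E) \<Longrightarrow> \<not> is_val u \<Longrightarrow> ectx E"
  by (induct E) (auto simp: list_all_iff is_val_subst)

lemma subst_ctx_Hole: "(subst_ctx x u E = Hole) = (E = Hole)"
  by (cases E) auto

lemma is_val_plug: "is_val (plug E t) \<Longrightarrow> E = Hole \<and> is_val t"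
  by (cases E) auto

lemma blame_plug: "Blame l = plug E t \<Longrightarrow> E = Hole"
  by (cases E) auto

lemma red_not_val: "red \<delta> t r \<Longrightarrow> \<not> is_val t"
  by (induct rule: red.induct) auto

lemma red_inner: "red \<delta> (plug E t') r \<Longrightarrow> E \<noteq> Hole \<Longrightarrow> is_val t'"
proof (cases E)
  case (COp g vs E' es)
  assume R: "red \<delta> (plug E t') r"
  have m: "plug E' t' \<in> set (vs @ [plug E' t'] @ es)" by simp
  from R have "is_val (plug E' t')"
  proof (cases rule: red.cases)
    case (R_Op f ks k)
    then have "vs @ [plug E' t'] @ es = map Const ks" using COp by simp
    then show ?thesis using m by auto
  qed (use COp in auto)
  then show ?thesis using is_val_plug by blast
next
  case (CAppL E' b)
  assume R: "red \<delta> (plug E t') r"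
  from R have "is_val (plug E' t')" by (cases rule: red.cases) (use CAppL in auto)
  then show ?thesis using is_val_plug by blast
next
  case (CAppR v E')
  assume R: "red \<delta> (plug E t') r"
  from R have "is_val (plug E' t')" by (cases rule: red.cases) (use CAppR in auto)
  then show ?thesis using is_val_plug by blast
next
  case (CTApp E' T)
  assume R: "red \<delta> (plug E t') r"
  from R have "is_val (plug E' t')" by (cases rule: red.cases) (use CTApp in auto)
  then show ?thesis using is_val_plug by blast
next
  case (CWait T e E' l)
  assume R: "red \<delta> (plug E t') r"
  from R have "is_val (plug E' t')" by (cases rule: red.cases) (use CWait in auto)
  then show ?thesis using is_val_plug by blast
next
  case (CActive T e E' v l)
  assume R: "red \<delta> (plug E t') r"
  from R have "is_val (plug E' t')" by (cases rule: red.cases) (use CActive in auto)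
  then show ?thesis using is_val_plug by blast
qed auto

definition atomic :: "('o \<Rightarrow> 'k const list \<Rightarrow> 'k const option) \<Rightarrow> ('b,'k,'o,'l) tm \<Rightarrow> bool" where
  "atomic \<delta> t \<longleftrightarrow> (\<exists>r. red \<delta> t r) \<or> (\<exists>l. t = Blame l)"

lemma atomic_not_val: "atomic \<delta> t \<Longrightarrow> \<not> is_val t"
  unfolding atomic_def using red_not_val by fastforce

lemma atomic_top: "atomic \<delta> t \<Longrightarrow> ectx E \<Longrightarrow> atomic \<delta> t' \<Longrightarrow> t = plug E t' \<Longrightarrow> E = Hole"
proof (rule ccontr)
  assume a: "atomic \<delta> t" "ectx E" "atomic \<delta> t'" "t = plug E t'" "E \<noteq> Hole"
  show False
  proof (cases "\<exists>l. t = Blame l")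
    case True then show ?thesis using a blame_plug by metis
  next
    case False
    then obtain r where "red \<delta> t r" using a(1) unfolding atomic_def by blast
    then have "is_val t'" using red_inner a by metis
    then show False using atomic_not_val a(3) by blast
  qed
qed

lemma list_split_unique:
  "list_all P vs1 \<Longrightarrow> list_all P vs2 \<Longrightarrow> \<not> P p1 \<Longrightarrow> \<not> P p2 \<Longrightarrow>
   vs1 @ p1 # es1 = vs2 @ p2 # es2 \<Longrightarrow> vs1 = vs2 \<and> p1 = p2 \<and> es1 = es2"
proof (induct vs1 arbitrary: vs2)
  case Nil then show ?case by (cases vs2) auto
next
  case (Cons a vs1) then show ?case by (cases vs2) auto
qed

lemma unique_decomp:
  "ectx E1 \<Longrightarrow> ectx E2 \<Longrightarrow> plug E1 t1 = plug E2 t2 \<Longrightarrow> atomic \<delta> t1 \<Longrightarrow> atomic \<delta> t2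
   \<Longrightarrow> E1 = E2 \<and> t1 = t2"
proof (induct E1 arbitrary: E2)
  case Hole
  then show ?case using atomic_top by (metis plug.simps(1))
next
  case (COp f vs E es)
  show ?case
  proof (cases E2)
    case Hole then show ?thesis using COp.prems atomic_top by (metis plug.simps(1))
  next
    case (COp g vs2 E2' es2)
    have nv: "\<not> is_val (plug E t1)" "\<not> is_val (plug E2' t2)"
      using COp.prems atomic_not_val is_val_plug by blast+
    have "vs = vs2 \<and> plug E t1 = plug E2' t2 \<and> es = es2"
      by (rule list_split_unique[of is_val]) (use COp.prems local.COp nv in auto)
    then show ?thesis using COp.hyps[of E2'] COp.prems local.COp by auto
  qed (insert COp.prems, auto)
next
  case (CAppL E e)
  show ?case
  proof (cases E2)
    case Hole then show ?thesis using CAppL.prems atomic_top by (metis plug.simps(1))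
  next
    case (CAppL E2' e2)
    then show ?thesis using CAppL.hyps[of E2'] CAppL.prems by auto
  next
    case (CAppR v E2')
    then have "is_val (plug E t1)" using CAppL.prems by auto
    then show ?thesis using CAppL.prems atomic_not_val is_val_plug by blast
  qed (insert CAppL.prems, auto)
next
  case (CAppR v E)
  show ?case
  proof (cases E2)
    case Hole then show ?thesis using CAppR.prems atomic_top by (metis plug.simps(1))
  next
    case (CAppR v2 E2')
    then show ?thesis using CAppR.hyps[of E2'] CAppR.prems by auto
  next
    case (CAppL E2' e2)
    then have "is_val (plug E2' t2)" using CAppR.prems by auto
    then show ?thesis using CAppR.prems atomic_not_val is_val_plug by blast
  qed (insert CAppR.prems, auto)
next
  case (CTApp E T)
  show ?case
  proof (cases E2)
    case Hole then show ?thesis using CTApp.prems atomic_top by (metis plug.simps(1))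
  next
    case (CTApp E2' T2)
    then show ?thesis using CTApp.hyps[of E2'] CTApp.prems by auto
  qed (insert CTApp.prems, auto)
next
  case (CWait T e E l)
  show ?case
  proof (cases E2)
    case Hole then show ?thesis using CWait.prems atomic_top by (metis plug.simps(1))
  next
    case (CWait T2 e2 E2' l2)
    then show ?thesis using CWait.hyps[of E2'] CWait.prems by auto
  qed (insert CWait.prems, auto)
next
  case (CActive T e E v l)
  show ?case
  proof (cases E2)
    case Hole then show ?thesis using CActive.prems atomic_top by (metis plug.simps(1))
  next
    case (CActive T2 e2 E2' v2 l2)
    then show ?thesis using CActive.hyps[of E2'] CActive.prems by auto
  qed (insert CActive.prems, auto)
qed

lemma map_Const_inj: "(map Const xs = map Const ys) = (xs = ys)"
  by (simp add: inj_map_eq_map inj_def)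

lemma red_det: "red \<delta> t r1 \<Longrightarrow> red \<delta> t r2 \<Longrightarrow> r1 = r2"
  by (induct rule: red.induct) (auto elim: red.cases simp: map_Const_inj)

lemma eval_det: "eval \<delta> a b \<Longrightarrow> eval \<delta> a c \<Longrightarrow> b = c"
proof (induct rule: eval.induct)
  case (E_Red E e1 e2)
  from E_Red.prems show ?case
  proof cases
    case (E_Red E' e1' e2')
    then have "E = E' \<and> e1 = e1'" using unique_decomp[of E E' e1 e1' \<delta>] \<open>ectx E\<close> \<open>red \<delta> e1 e2\<close>
      unfolding atomic_def by blast
    then show ?thesis using E_Red red_det \<open>red \<delta> e1 e2\<close> by metis
  next
    case (E_Blame E' l)
    then have "E = E' \<and> e1 = Blame l" using unique_decomp[of E E' e1 "Blame l" \<delta>] \<open>ectx E\<close> \<open>red \<delta> e1 e2\<close>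
      unfolding atomic_def by blast
    then show ?thesis using \<open>red \<delta> e1 e2\<close> by (auto elim: red.cases)
  qed
next
  case (E_Blame E l)
  from E_Blame.prems show ?case
  proof cases
    case (E_Red E' e1' e2')
    then have "E = E' \<and> Blame l = e1'" using unique_decomp[of E E' "Blame l" e1' \<delta>] \<open>ectx E\<close>
      unfolding atomic_def by blast
    then show ?thesis using E_Red by (auto elim: red.cases)
  next
    case (E_Blame E' l')
    then have "E = E' \<and> Blame l = Blame l'" using unique_decomp[of E E' "Blame l" "Blame l'" \<delta>] \<open>ectx E\<close>
      unfolding atomic_def by blast
    then show ?thesis using E_Blame by auto
  qed
qed


lemma fv_red: "red \<delta> t r \<Longrightarrow> fv_tm r \<subseteq> fv_tm t"
  by (induct rule: red.induct) (auto dest: fv_open(2) fv_topen(2) simp: fv_shift)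

lemma fv_plug: "fv_tm t' \<subseteq> fv_tm t \<Longrightarrow> fv_tm (plug E t') \<subseteq> fv_tm (plug E t)"
  by (induct E) auto

lemma fv_eval: "eval \<delta> a b \<Longrightarrow> fv_tm b \<subseteq> fv_tm a"
  by (induct rule: eval.induct) (metis fv_plug fv_red, simp)

lemma eval_not_val: "eval \<delta> a b \<Longrightarrow> \<not> is_val a"
proof (induct rule: eval.induct)
  case (E_Red E e1 e2)
  then show ?case using is_val_plug red_not_val by blast
next
  case (E_Blame E l)
  then show ?case using is_val_plug by blast
qed

lemma no_eval_blame: "\<not> eval \<delta> (Blame l) b"
proof
  assume "eval \<delta> (Blame l) b"
  then show False
  proof cases
    case (E_Red E e1 e2)
    then have "E = Hole" using blame_plug by metis
    then show False using E_Red by (auto elim: red.cases)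
  next
    case (E_Blame E l')
    then show False using blame_plug by metis
  qed
qed

lemma decomp:
  "subst_tm x u e = plug E t \<Longrightarrow>
   (\<exists>E0 t0. e = plug E0 t0 \<and> E = subst_ctx x u E0 \<and> t = subst_tm x u t0 \<and> t0 \<noteq> FVar x) \<or>
   (\<exists>E0 E1. e = plug E0 (FVar x) \<and> u = plug E1 t \<and> E = ccomp (subst_ctx x u E0) E1)"
proof (induct E arbitrary: e)
  case Hole
  then show ?case
    by (cases "e = FVar x") (rule disjI2, rule exI[of _ Hole], rule exI[of _ Hole], simp,
                              rule disjI1, rule exI[of _ Hole], rule exI[of _ e], simp)
next
  case (COp f vs E' es)
  show ?case
  proof (cases "e = FVar x")
    case True then show ?thesis using COp.prems
      by (intro disjI2 exI[of _ Hole] exI[of _ "COp f vs E' es"]) auto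
  next
    case False
    then obtain args where e: "e = Op f args" "map (subst_tm x u) args = vs @ [plug E' t] @ es"
      using COp.prems by (cases e) auto
    then obtain vs0 a es0 where A: "args = vs0 @ a # es0" "map (subst_tm x u) vs0 = vs"
       "subst_tm x u a = plug E' t" "map (subst_tm x u) es0 = es"
      by (auto simp: map_eq_append_conv map_eq_Cons_conv)
    from COp.hyps[OF A(3)] show ?thesis
    proof
      assume "\<exists>E0 t0. a = plug E0 t0 \<and> E' = subst_ctx x u E0 \<and> t = subst_tm x u t0 \<and> t0 \<noteq> FVar x"
      then obtain E0 t0 where "a = plug E0 t0 \<and> E' = subst_ctx x u E0 \<and> t = subst_tm x u t0 \<and> t0 \<noteq> FVar x" by blast
      then show ?thesis using e A by (intro disjI1 exI[of _ "COp f vs0 E0 es0"] exI[of _ t0]) auto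
    next
      assume "\<exists>E0 E1. a = plug E0 (FVar x) \<and> u = plug E1 t \<and> E' = ccomp (subst_ctx x u E0) E1"
      then obtain E0 E1 where "a = plug E0 (FVar x) \<and> u = plug E1 t \<and> E' = ccomp (subst_ctx x u E0) E1" by blast
      then show ?thesis using e A by (intro disjI2 exI[of _ "COp f vs0 E0 es0"] exI[of _ E1]) auto
    qed
  qed
next
  case (CAppL E' b)
  show ?case
  proof (cases "e = FVar x")
    case True then show ?thesis using CAppL.prems
      by (intro disjI2 exI[of _ Hole] exI[of _ "CAppL E' b"]) auto
  next
    case False
    then obtain a c where e: "e = App a c" "subst_tm x u a = plug E' t" "subst_tm x u c = b"
      using CAppL.prems by (cases e) auto
    from CAppL.hyps[OF e(2)] show ?thesis
    proof
      assume "\<exists>E0 t0. a = plug E0 t0 \<and> E' = subst_ctx x u E0 \<and> t = subst_tm x u t0 \<and> t0 \<noteq> FVar x"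
      then obtain E0 t0 where "a = plug E0 t0 \<and> E' = subst_ctx x u E0 \<and> t = subst_tm x u t0 \<and> t0 \<noteq> FVar x" by blast
      then show ?thesis using e by (intro disjI1 exI[of _ "CAppL E0 c"] exI[of _ t0]) auto
    next
      assume "\<exists>E0 E1. a = plug E0 (FVar x) \<and> u = plug E1 t \<and> E' = ccomp (subst_ctx x u E0) E1"
      then obtain E0 E1 where "a = plug E0 (FVar x) \<and> u = plug E1 t \<and> E' = ccomp (subst_ctx x u E0) E1" by blast
      then show ?thesis using e by (intro disjI2 exI[of _ "CAppL E0 c"] exI[of _ E1]) auto
    qed
  qed
next
  case (CAppR v E')
  show ?case
  proof (cases "e = FVar x")
    case True then show ?thesis using CAppR.prems
      by (intro disjI2 exI[of _ Hole] exI[of _ "CAppR v E'"]) auto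
  next
    case False
    then obtain a c where e: "e = App c a" "subst_tm x u a = plug E' t" "subst_tm x u c = v"
      using CAppR.prems by (cases e) auto
    from CAppR.hyps[OF e(2)] show ?thesis
    proof
      assume "\<exists>E0 t0. a = plug E0 t0 \<and> E' = subst_ctx x u E0 \<and> t = subst_tm x u t0 \<and> t0 \<noteq> FVar x"
      then obtain E0 t0 where "a = plug E0 t0 \<and> E' = subst_ctx x u E0 \<and> t = subst_tm x u t0 \<and> t0 \<noteq> FVar x" by blast
      then show ?thesis using e by (intro disjI1 exI[of _ "CAppR c E0"] exI[of _ t0]) auto
    next
      assume "\<exists>E0 E1. a = plug E0 (FVar x) \<and> u = plug E1 t \<and> E' = ccomp (subst_ctx x u E0) E1"
      then obtain E0 E1 where "a = plug E0 (FVar x) \<and> u = plug E1 t \<and> E' = ccomp (subst_ctx x u E0) E1" by blast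
      then show ?thesis using e by (intro disjI2 exI[of _ "CAppR c E0"] exI[of _ E1]) auto
    qed
  qed
next
  case (CTApp E' T)
  show ?case
  proof (cases "e = FVar x")
    case True then show ?thesis using CTApp.prems
      by (intro disjI2 exI[of _ Hole] exI[of _ "CTApp E' T"]) auto
  next
    case False
    then obtain a T0 where e: "e = TApp a T0" "subst_tm x u a = plug E' t" "subst_ty x u T0 = T"
      using CTApp.prems by (cases e) auto
    from CTApp.hyps[OF e(2)] show ?thesis
    proof
      assume "\<exists>E0 t0. a = plug E0 t0 \<and> E' = subst_ctx x u E0 \<and> t = subst_tm x u t0 \<and> t0 \<noteq> FVar x"
      then obtain E0 t0 where "a = plug E0 t0 \<and> E' = subst_ctx x u E0 \<and> t = subst_tm x u t0 \<and> t0 \<noteq> FVar x" by blast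
      then show ?thesis using e by (intro disjI1 exI[of _ "CTApp E0 T0"] exI[of _ t0]) auto
    next
      assume "\<exists>E0 E1. a = plug E0 (FVar x) \<and> u = plug E1 t \<and> E' = ccomp (subst_ctx x u E0) E1"
      then obtain E0 E1 where "a = plug E0 (FVar x) \<and> u = plug E1 t \<and> E' = ccomp (subst_ctx x u E0) E1" by blast
      then show ?thesis using e by (intro disjI2 exI[of _ "CTApp E0 T0"] exI[of _ E1]) auto
    qed
  qed
next
  case (CWait T b E' l)
  show ?case
  proof (cases "e = FVar x")
    case True then show ?thesis using CWait.prems
      by (intro disjI2 exI[of _ Hole] exI[of _ "CWait T b E' l"]) auto
  next
    case False
    then obtain a T0 b0 where e: "e = Wait T0 b0 a l" "subst_tm x u a = plug E' t" "subst_ty x u T0 = T"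
        "subst_tm x u b0 = b"
      using CWait.prems by (cases e) auto
    from CWait.hyps[OF e(2)] show ?thesis
    proof
      assume "\<exists>E0 t0. a = plug E0 t0 \<and> E' = subst_ctx x u E0 \<and> t = subst_tm x u t0 \<and> t0 \<noteq> FVar x"
      then obtain E0 t0 where "a = plug E0 t0 \<and> E' = subst_ctx x u E0 \<and> t = subst_tm x u t0 \<and> t0 \<noteq> FVar x" by blast
      then show ?thesis using e by (intro disjI1 exI[of _ "CWait T0 b0 E0 l"] exI[of _ t0]) auto
    next
      assume "\<exists>E0 E1. a = plug E0 (FVar x) \<and> u = plug E1 t \<and> E' = ccomp (subst_ctx x u E0) E1"
      then obtain E0 E1 where "a = plug E0 (FVar x) \<and> u = plug E1 t \<and> E' = ccomp (subst_ctx x u E0) E1" by blast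
      then show ?thesis using e by (intro disjI2 exI[of _ "CWait T0 b0 E0 l"] exI[of _ E1]) auto
    qed
  qed
next
  case (CActive T b E' v l)
  show ?case
  proof (cases "e = FVar x")
    case True then show ?thesis using CActive.prems
      by (intro disjI2 exI[of _ Hole] exI[of _ "CActive T b E' v l"]) auto
  next
    case False
    then obtain a T0 b0 c where e: "e = Active T0 b0 a c l" "subst_tm x u a = plug E' t" "subst_ty x u T0 = T"
        "subst_tm x u b0 = b" "subst_tm x u c = v"
      using CActive.prems by (cases e) auto
    from CActive.hyps[OF e(2)] show ?thesis
    proof
      assume "\<exists>E0 t0. a = plug E0 t0 \<and> E' = subst_ctx x u E0 \<and> t = subst_tm x u t0 \<and> t0 \<noteq> FVar x"
      then obtain E0 t0 where "a = plug E0 t0 \<and> E' = subst_ctx x u E0 \<and> t = subst_tm x u t0 \<and> t0 \<noteq> FVar x" by blast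
      then show ?thesis using e by (intro disjI1 exI[of _ "CActive T0 b0 E0 c l"] exI[of _ t0]) auto
    next
      assume "\<exists>E0 E1. a = plug E0 (FVar x) \<and> u = plug E1 t \<and> E' = ccomp (subst_ctx x u E0) E1"
      then obtain E0 E1 where "a = plug E0 (FVar x) \<and> u = plug E1 t \<and> E' = ccomp (subst_ctx x u E0) E1" by blast
      then show ?thesis using e by (intro disjI2 exI[of _ "CActive T0 b0 E0 c l"] exI[of _ E1]) auto
    qed
  qed
qed


lemma map_subst_Const: "map (subst_tm x u) args = map Const ks \<Longrightarrow> \<not> is_val u \<Longrightarrow> args = map Const ks"
proof (induct args arbitrary: ks)
  case Nil then show ?case by simp
next
  case (Cons a args)
  from Cons.prems(1) obtain k ks' where "ks = k # ks'" "subst_tm x u a = Const k" "map (subst_tm x u) args = map Const ks'"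
    by (cases ks) auto
  moreover have "a = Const k" using calculation(2) Cons.prems(2) by (cases a) (auto split: if_splits)
  ultimately show ?case using Cons by auto
qed

lemma is_ref_subst: "is_ref (subst_ty x u T) = is_ref T"
  by (cases T) auto

lemma red_subst:
  assumes R: "red \<delta> (subst_tm x u e) r" and nv: "\<not> is_val u" and wu: "wf_tm 0 0 u"
    and ne: "e \<noteq> FVar x"
  shows "\<exists>r0. r = subst_tm x u r0 \<and> (\<forall>u'. wf_tm 0 0 u' \<longrightarrow> red \<delta> (subst_tm x u' e) (subst_tm x u' r0))"
  using R
proof (cases rule: red.cases)
  case (R_Op f ks k)
  then obtain args where e: "e = Op f args" "map (subst_tm x u) args = map Const ks"
    using ne by (cases e) auto
  then have "args = map Const ks" using map_subst_Const nv by blast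
  then show ?thesis using e R_Op
    by (intro exI[of _ "Const k"]) (auto simp: comp_def intro: red.intros)
next
  case (R_Beta v T b)
  then obtain a c where e: "e = App a c" "subst_tm x u a = Lam T b" "subst_tm x u c = v"
    using ne by (cases e) auto
  then obtain T0 b0 where a: "a = Lam T0 b0" "subst_ty x u T0 = T" "subst_tm x u b0 = b"
    using nv by (cases a) (auto split: if_splits)
  have vc: "is_val c" using e R_Beta is_val_subst nv by metis
  show ?thesis using e a vc R_Beta wu
    by (intro exI[of _ "open_tm 0 c b0"]) (auto simp: subst_open is_val_subst2 intro: red.intros)
next
  case (R_TBeta b T)
  then obtain a T0 where e: "e = TApp a T0" "subst_tm x u a = TLam b" "subst_ty x u T0 = T"
    using ne by (cases e) auto
  then obtain b0 where a: "a = TLam b0" "subst_tm x u b0 = b"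
    using nv by (cases a) (auto split: if_splits)
  show ?thesis using e a R_TBeta wu
    by (intro exI[of _ "topen_tm 0 T0 b0"]) (auto simp: subst_topen intro: red.intros)
next
  case (R_Base B l)
  then obtain a c where e: "e = App a c" "subst_tm x u a = Cast (TBase B) (TBase B) l" "subst_tm x u c = r"
    using ne by (cases e) auto
  then obtain A1 A2 where a: "a = Cast A1 A2 l" "subst_ty x u A1 = TBase B" "subst_ty x u A2 = TBase B"
    using nv by (cases a) (auto split: if_splits)
  have A1: "A1 = TBase B" using a by (cases A1) auto
  have A2: "A2 = TBase B" using a by (cases A2) auto
  note A = A1 A2
  have vc: "is_val c" using e R_Base is_val_subst nv by metis
  show ?thesis using e a A vc R_Base
    by (intro exI[of _ c]) (auto simp: is_val_subst2 intro: red.intros)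
next
  case (R_Fun v T11 T12 T21 T22 l)
  then obtain a c where e: "e = App a c" "subst_tm x u a = Cast (TArr T11 T12) (TArr T21 T22) l" "subst_tm x u c = v"
    using ne by (cases e) auto
  then obtain A1 A2 where a: "a = Cast A1 A2 l" "subst_ty x u A1 = TArr T11 T12" "subst_ty x u A2 = TArr T21 T22"
    using nv by (cases a) (auto split: if_splits)
  obtain A11 A12 where A1: "A1 = TArr A11 A12" "subst_ty x u A11 = T11" "subst_ty x u A12 = T12"
    using a by (cases A1) auto
  obtain A21 A22 where A2: "A2 = TArr A21 A22" "subst_ty x u A21 = T21" "subst_ty x u A22 = T22"
    using a by (cases A2) auto
  have vc: "is_val c" using e R_Fun is_val_subst nv by metis
  show ?thesis using e a A1 A2 vc R_Fun wu
    by (intro exI[of _ "Lam A21 (App (Lam A11 (App (Cast A12 (shift_ty 0 A22) l) (App c (BVar 0))))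
             (App (Cast A21 A11 l) (BVar 0)))"]) (auto simp: is_val_subst2 subst_shift intro: red.intros)
next
  case (R_Forall v T1 T2 l)
  then obtain a c where e: "e = App a c" "subst_tm x u a = Cast (TAll T1) (TAll T2) l" "subst_tm x u c = v"
    using ne by (cases e) auto
  then obtain A1 A2 where a: "a = Cast A1 A2 l" "subst_ty x u A1 = TAll T1" "subst_ty x u A2 = TAll T2"
    using nv by (cases a) (auto split: if_splits)
  obtain B1 where A1: "A1 = TAll B1" "subst_ty x u B1 = T1" using a by (cases A1) auto
  obtain B2 where A2: "A2 = TAll B2" "subst_ty x u B2 = T2" using a by (cases A2) auto
  have vc: "is_val c" using e R_Forall is_val_subst nv by metis
  show ?thesis using e a A1 A2 vc R_Forall
    by (intro exI[of _ "TLam (App (Cast B1 B2 l) (TApp c (TBVar 0)))"]) (auto simp: is_val_subst2 intro: red.intros)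
next
  case (R_Forget v T1 e1 T2 l)
  then obtain a c where e: "e = App a c" "subst_tm x u a = Cast (TRef T1 e1) T2 l" "subst_tm x u c = v"
    using ne by (cases e) auto
  then obtain A1 A2 where a: "a = Cast A1 A2 l" "subst_ty x u A1 = TRef T1 e1" "subst_ty x u A2 = T2"
    using nv by (cases a) (auto split: if_splits)
  obtain B1 b1 where A1: "A1 = TRef B1 b1" "subst_ty x u B1 = T1" using a by (cases A1) auto
  have vc: "is_val c" using e R_Forget is_val_subst nv by metis
  show ?thesis using e a A1 vc R_Forget
    by (intro exI[of _ "App (Cast B1 A2 l) c"]) (auto simp: is_val_subst2 intro: red.intros)
next
  case (R_PreCheck v T1 T2 e2 l)
  then obtain a c where e: "e = App a c" "subst_tm x u a = Cast T1 (TRef T2 e2) l" "subst_tm x u c = v"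
    using ne by (cases e) auto
  then obtain A1 A2 where a: "a = Cast A1 A2 l" "subst_ty x u A1 = T1" "subst_ty x u A2 = TRef T2 e2"
    using nv by (cases a) (auto split: if_splits)
  obtain B2 b2 where A2: "A2 = TRef B2 b2" "subst_ty x u B2 = T2" "subst_tm x u b2 = e2" using a by (cases A2) auto
  have vc: "is_val c" using e R_PreCheck is_val_subst nv by metis
  have nr: "\<not> is_ref A1" using a R_PreCheck is_ref_subst by metis
  show ?thesis using e a A2 vc nr R_PreCheck
    by (intro exI[of _ "Wait B2 b2 (App (Cast A1 B2 l) c) l"]) (auto simp: is_val_subst2 is_ref_subst intro: red.intros)
next
  case (R_Check v T b l)
  then obtain c T0 b0 where e: "e = Wait T0 b0 c l" "subst_tm x u c = v" "subst_ty x u T0 = T" "subst_tm x u b0 = b"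
    using ne by (cases e) auto
  have vc: "is_val c" using e R_Check is_val_subst nv by metis
  show ?thesis using e vc R_Check wu
    by (intro exI[of _ "Active T0 b0 (open_tm 0 c b0) c l"]) (auto simp: is_val_subst2 subst_open intro: red.intros)
next
  case (R_OK T b l)
  then obtain c3 c4 T0 b0 where e: "e = Active T0 b0 c3 c4 l" "subst_tm x u c3 = Const CTrue" "subst_tm x u c4 = r"
    using ne by (cases e) auto
  have "c3 = Const CTrue" using e(2) nv by (cases c3) (auto split: if_splits)
  then show ?thesis using e R_OK
    by (intro exI[of _ c4]) (auto intro: red.intros)
next
  case (R_Fail T b v l)
  then obtain c3 c4 T0 b0 where e: "e = Active T0 b0 c3 c4 l" "subst_tm x u c3 = Const CFalse"
    using ne by (cases e) auto
  have "c3 = Const CFalse" using e(2) nv by (cases c3) (auto split: if_splits)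
  then show ?thesis using e R_Fail
    by (intro exI[of _ "Blame l"]) (auto intro: red.intros)
qed


theorem mainTheorem3:
  fixes \<delta> :: "'o \<Rightarrow> 'k const list \<Rightarrow> 'k const option"
    and e e1 e2 e1' :: "('b,'k,'o,'l) tm"
    and x :: nat
  assumes "is_term e" and "is_term e1" and "is_term e2" and "is_term e1'"
    and "x \<notin> fv_tm e1"
    and "eval \<delta> e1 e2"
    and "eval \<delta> (subst_tm x e1 e) e1'"
  shows "\<exists>e'. is_term e' \<and> evals \<delta> (subst_tm x e2 e) (subst_tm x e2 e')
                          \<and> evals \<delta> e1' (subst_tm x e1 e')"
proof -
  have nv: "\<not> is_val e1" using assms(6) eval_not_val by blast
  have w1: "wf_tm 0 0 e1" and w2: "wf_tm 0 0 e2" and w1': "wf_tm 0 0 e1'"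
    using assms(2,3,4) unfolding is_term_def by auto
  have x2: "x \<notin> fv_tm e2" using fv_eval[OF assms(6)] assms(5) by blast
  have s22: "subst_tm x e2 e2 = e2" using subst_fresh(2)[OF x2] .
  have s12: "subst_tm x e1 e2 = e2" using subst_fresh(2)[OF x2] .
  from assms(7) show ?thesis
  proof cases
    case (E_Red E r r')
    from decomp[OF E_Red(1)] show ?thesis
    proof
      assume "\<exists>E0 t0. e = plug E0 t0 \<and> E = subst_ctx x e1 E0 \<and> r = subst_tm x e1 t0 \<and> t0 \<noteq> FVar x"
      then obtain E0 t0 where D: "e = plug E0 t0" "E = subst_ctx x e1 E0" "r = subst_tm x e1 t0" "t0 \<noteq> FVar x"
        by blast
      obtain r0 where r0: "r' = subst_tm x e1 r0" "red \<delta> (subst_tm x e2 t0) (subst_tm x e2 r0)"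
        using red_subst[of \<delta> x e1 t0 r'] E_Red(4) D nv w1 w2 by blast
      have ec: "ectx (subst_ctx x e2 E0)" using ectx_subst1 ectx_subst2 E_Red(3) D(2) nv by blast
      have eq1: "e1' = subst_tm x e1 (plug E0 r0)" using E_Red(2) D(2) r0(1) by (simp add: plug_subst)
      have st: "eval \<delta> (subst_tm x e2 e) (subst_tm x e2 (plug E0 r0))"
        unfolding D(1) plug_subst using eval.E_Red[OF ec r0(2)] .
      have "is_term (plug E0 r0)" using w1' eq1 wf_subst_rev(2)[OF nv] unfolding is_term_def by blast
      then show ?thesis using st eq1 by blast
    next
      assume "\<exists>E0 E1. e = plug E0 (FVar x) \<and> e1 = plug E1 r \<and> E = ccomp (subst_ctx x e1 E0) E1"
      then obtain E0 E1 where D: "e = plug E0 (FVar x)" "e1 = plug E1 r" "E = ccomp (subst_ctx x e1 E0) E1"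
        by blast
      have ec1: "ectx E1" using E_Red(3) D(3) ectx_ccomp by blast
      have "eval \<delta> e1 (plug E1 r')" using D(2) eval.E_Red[OF ec1 E_Red(4)] by simp
      then have e2eq: "e2 = plug E1 r'" using eval_det assms(6) by blast
      have eq1: "e1' = subst_tm x e1 (plug E0 e2)"
        using E_Red(2) D(3) e2eq s12 by (simp add: plug_subst plug_ccomp)
      have eq2: "subst_tm x e2 e = subst_tm x e2 (plug E0 e2)"
        using D(1) s22 by (simp add: plug_subst)
      have "is_term (plug E0 e2)" using w1' eq1 wf_subst_rev(2)[OF nv] unfolding is_term_def by blast
      then show ?thesis using eq1 eq2 by auto
    qed
  next
    case (E_Blame E l)
    have tb: "is_term (Blame l)" unfolding is_term_def by simp
    from decomp[OF E_Blame(1)] show ?thesis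
    proof
      assume "\<exists>E0 t0. e = plug E0 t0 \<and> E = subst_ctx x e1 E0 \<and> Blame l = subst_tm x e1 t0 \<and> t0 \<noteq> FVar x"
      then obtain E0 t0 where D: "e = plug E0 t0" "E = subst_ctx x e1 E0" "Blame l = subst_tm x e1 t0" "t0 \<noteq> FVar x"
        by blast
      have t0: "t0 = Blame l" using D(3,4) by (cases t0) (auto split: if_splits)
      have ec: "ectx (subst_ctx x e2 E0)" using ectx_subst1 ectx_subst2 E_Blame(3) D(2) nv by blast
      have nh: "subst_ctx x e2 E0 \<noteq> Hole" using E_Blame(4) D(2) subst_ctx_Hole by metis
      have "eval \<delta> (subst_tm x e2 e) (Blame l)"
        unfolding D(1) plug_subst t0 using eval.E_Blame[OF ec nh] by simp
      then show ?thesis using tb E_Blame(2) by (intro exI[of _ "Blame l"]) auto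
    next
      assume "\<exists>E0 E1. e = plug E0 (FVar x) \<and> e1 = plug E1 (Blame l) \<and> E = ccomp (subst_ctx x e1 E0) E1"
      then obtain E0 E1 where D: "e = plug E0 (FVar x)" "e1 = plug E1 (Blame l)" "E = ccomp (subst_ctx x e1 E0) E1"
        by blast
      have ec1: "ectx E1" using E_Blame(3) D(3) ectx_ccomp by blast
      have nh1: "E1 \<noteq> Hole" using D(2) assms(6) no_eval_blame by fastforce
      have "eval \<delta> e1 (Blame l)" using D(2) eval.E_Blame[OF ec1 nh1] by simp
      then have e2eq: "e2 = Blame l" using eval_det assms(6) by blast
      have ec: "ectx (subst_ctx x e2 E0)" using ectx_subst1 ectx_subst2 E_Blame(3) D(3) ectx_ccomp nv by blast
      have "evals \<delta> (subst_tm x e2 e) (Blame l)"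
      proof (cases "E0 = Hole")
        case True then show ?thesis using D(1) e2eq by simp
      next
        case False
        then have nh: "subst_ctx x e2 E0 \<noteq> Hole" using subst_ctx_Hole by metis
        have "eval \<delta> (subst_tm x e2 e) (Blame l)"
          unfolding D(1) plug_subst using eval.E_Blame[OF ec nh] e2eq by simp
        then show ?thesis by blast
      qed
      then show ?thesis using tb E_Blame(2) by (intro exI[of _ "Blame l"]) auto
    qed
  qed
qed

end
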